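(* Let $m,d,R\ge1$ be integers, $0<\lambda<\sigma<1$, $L_A,L_C,L_Z\ge0$, $\eta^0>0$, $c^*\ge0$, $D\ge0$, and let $\omega\in[0,\bar\omega(\sigma))$ where $\bar\omega(\sigma)=\frac{\sigma}{R}\cdot\frac{\sigma-\lambda}{\sigma-\lambda+2L_AL_Z[R\psi]^2}$ and $\psi=\max\{1,(2L_C)^{R-1}\}$. Define $$V_0=\max\{c^*,D\}+\frac{L_A\psi\sqrt{md}\,R^2\eta^0}{\sigma-\lambda}\cdot\frac{1+\frac{R\omega}{\sigma}[(1+L_C\sigma)\psi-1]}{1-\omega/\bar\omega(\sigma)},$$ $F^0=0$ and, for $s\in[R]$, $$F^s=\frac{\sqrt{md}\,\eta^0(1+L_C\sigma)+2L_ZV_0}{\sigma-\omega}\sum_{s'=0}^{s-1}\Big(\frac{2L_C}{1-\omega/\sigma}\Big)^{s'}.$$ Let $\tilde L_A=L_A\sum_{s=0}^{R-1}L_C^s$ and $\mathbf F=(F^1,\dots,F^R)$. Then $$V_0\ge\max\Big\{D,\ \frac{\sqrt{md}\,R\eta^0+\omega\sum_{s=1}^RF^s}{\sigma-\lambda}\,\tilde L_A\Big\},$$ and for every $s\in[R]$, $$F^s\ge\max\Big\{L_Zc^*+L_C\sqrt{md}\,\eta^0+L_C(1+\omega)F^{s-1},\ \frac{\sqrt{md}\,\eta^0(1+L_C\sigma)+L_C\sigma(1+\omega)F^{s-1}+L_Z(1+\sigma)V_0}{\sigma-\omega}\Big\}.$$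
   Context: All quantities are real numbers; $[R]=\{1,\dots,R\}$. Note that $\omega<\bar\omega(\sigma)\le\sigma/R$. *)

theory Defs
  imports Complex_Main
begin

definition psi :: "real \<Rightarrow> nat \<Rightarrow> real" where
  "psi L_C R = max 1 ((2 * L_C) ^ (R - 1))"

definition omega_bar :: "nat \<Rightarrow> real \<Rightarrow> real \<Rightarrow> real \<Rightarrow> real \<Rightarrow> real \<Rightarrow> real" where
  "omega_bar R \<sigma> lam L_A L_Z L_C =
     (\<sigma> / real R) * ((\<sigma> - lam) / (\<sigma> - lam + 2 * L_A * L_Z * (real R * psi L_C R)\<^sup>2))"

definition V0 :: "nat \<Rightarrow> nat \<Rightarrow> nat \<Rightarrow> real \<Rightarrow> real \<Rightarrow> real \<Rightarrow> real \<Rightarrow> real \<Rightarrow> real \<Rightarrow> real \<Rightarrow> real \<Rightarrow> real \<Rightarrow> real" where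
  "V0 m d R \<sigma> lam L_A L_C L_Z \<eta>0 cstar D \<omega> =
     max cstar D
     + (L_A * psi L_C R * sqrt (real m * real d) * (real R)\<^sup>2 * \<eta>0) / (\<sigma> - lam)
       * ((1 + (real R * \<omega> / \<sigma>) * ((1 + L_C * \<sigma>) * psi L_C R - 1))
          / (1 - \<omega> / omega_bar R \<sigma> lam L_A L_Z L_C))"

definition Fseq :: "nat \<Rightarrow> nat \<Rightarrow> nat \<Rightarrow> real \<Rightarrow> real \<Rightarrow> real \<Rightarrow> real \<Rightarrow> real \<Rightarrow> real \<Rightarrow> real \<Rightarrow> real \<Rightarrow> real \<Rightarrow> nat \<Rightarrow> real" where
  "Fseq m d R \<sigma> lam L_A L_C L_Z \<eta>0 cstar D \<omega> s =
     (if s = 0 then 0 else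
      (sqrt (real m * real d) * \<eta>0 * (1 + L_C * \<sigma>) + 2 * L_Z * V0 m d R \<sigma> lam L_A L_C L_Z \<eta>0 cstar D \<omega>)
        / (\<sigma> - \<omega>) * (\<Sum>s'<s. (2 * L_C / (1 - \<omega> / \<sigma>)) ^ s'))"

end

theory Submission
  imports Defs
begin

lemma pow_le_psi:
  fixes LC :: real assumes "j < R" "0 \<le> LC"
  shows "(2*LC)^j \<le> psi LC R" "LC^j \<le> psi LC R"
proof -
  have "(2*LC)^j \<le> max 1 ((2*LC)^(R-1))"
  proof (cases "2*LC \<le> 1")
    case True then have "(2*LC)^j \<le> 1" using assms power_le_one[of "2*LC" j] by linarith
    then show ?thesis by simp
  next
    case False then have "(2*LC)^j \<le> (2*LC)^(R-1)" using assms
      by (intro power_increasing) auto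
    then show ?thesis by simp
  qed
  then show 1: "(2*LC)^j \<le> psi LC R" by (simp add: psi_def)
  have "LC^j \<le> (2*LC)^j" using assms by (intro power_mono) auto
  with 1 show "LC^j \<le> psi LC R" by simp
qed

lemma term_bound:
  fixes LC t :: real assumes "0 \<le> t" "t < 1" "0 \<le> LC" "j < R"
  shows "(2*LC/(1-t))^j * (1 - real R * t) \<le> psi LC R * (1-t)"
proof -
  have "1 - real R * t \<le> 1 + real (Suc j) * (-t)"
  proof -
    have "real (Suc j) \<le> real R" using assms by simp
    then have "real (Suc j) * t \<le> real R * t" using assms(1) by (rule mult_right_mono)
    then show ?thesis by simp
  qed
  also have "\<dots> \<le> (1 + (-t))^(Suc j)" by (rule Bernoulli_inequality) (use assms(2) in simp)
  finally have b: "1 - real R * t \<le> (1-t)^(Suc j)" by simp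
  have "(2*LC/(1-t))^j * (1 - real R * t) \<le> (2*LC/(1-t))^j * (1-t)^(Suc j)"
    using b assms by (intro mult_left_mono) auto
  also have "\<dots> = (2*LC)^j * (1-t)" using assms(2) by (simp add: power_divide field_simps)
  also have "\<dots> \<le> psi LC R * (1-t)" using pow_le_psi(1)[OF assms(4,3)] assms(2)
    by (intro mult_right_mono) auto
  finally show ?thesis .
qed

lemma key_sum:
  fixes LC t :: real assumes "0 \<le> t" "t < 1" "0 \<le> LC"
  shows "(\<Sum>s=1..R. \<Sum>j<s. (2*LC/(1-t))^j) * (1 - real R * t) \<le> (real R)^2 * psi LC R * (1-t)"
proof -
  have p1: "1 \<le> psi LC R" by (simp add: psi_def)
  have "(\<Sum>s=1..R. \<Sum>j<s. (2*LC/(1-t))^j) * (1 - real R * t)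
      = (\<Sum>s=1..R. \<Sum>j<s. (2*LC/(1-t))^j * (1 - real R * t))"
    by (simp add: sum_distrib_right)
  also have "\<dots> \<le> (\<Sum>s=1..R. \<Sum>j<s. psi LC R * (1-t))"
    by (intro sum_mono term_bound) (use assms in auto)
  also have "\<dots> = (\<Sum>s=1..R. real s * (psi LC R * (1-t)))" by simp
  also have "\<dots> \<le> (\<Sum>s=1..R. real R * (psi LC R * (1-t)))"
  proof (intro sum_mono mult_right_mono)
    show "0 \<le> psi LC R * (1-t)" using assms(2) p1 by simp
  qed auto
  also have "\<dots> = (real R)^2 * psi LC R * (1-t)" by (simp add: power2_eq_square)
  finally show ?thesis .
qed

theorem lemma4:
  fixes m d R :: nat
    and \<sigma> lam L_A L_C L_Z \<eta>0 cstar D \<omega> :: real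
  assumes "m \<ge> 1" and "d \<ge> 1" and "R \<ge> 1"
    and "0 < lam" and "lam < \<sigma>" and "\<sigma> < 1"
    and "L_A \<ge> 0" and "L_C \<ge> 0" and "L_Z \<ge> 0"
    and "\<eta>0 > 0" and "cstar \<ge> 0" and "D \<ge> 0"
    and "0 \<le> \<omega>" and "\<omega> < omega_bar R \<sigma> lam L_A L_Z L_C"
  shows "V0 m d R \<sigma> lam L_A L_C L_Z \<eta>0 cstar D \<omega> \<ge>
           max D ((sqrt (real m * real d) * real R * \<eta>0
                   + \<omega> * (\<Sum>s=1..R. Fseq m d R \<sigma> lam L_A L_C L_Z \<eta>0 cstar D \<omega> s))
                  / (\<sigma> - lam) * (L_A * (\<Sum>s<R. L_C ^ s)))
       \<and> (\<forall>s\<in>{1..R}.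
           Fseq m d R \<sigma> lam L_A L_C L_Z \<eta>0 cstar D \<omega> s \<ge>
           max (L_Z * cstar + L_C * sqrt (real m * real d) * \<eta>0
                + L_C * (1 + \<omega>) * Fseq m d R \<sigma> lam L_A L_C L_Z \<eta>0 cstar D \<omega> (s - 1))
               ((sqrt (real m * real d) * \<eta>0 * (1 + L_C * \<sigma>)
                 + L_C * \<sigma> * (1 + \<omega>) * Fseq m d R \<sigma> lam L_A L_C L_Z \<eta>0 cstar D \<omega> (s - 1)
                 + L_Z * (1 + \<sigma>) * V0 m d R \<sigma> lam L_A L_C L_Z \<eta>0 cstar D \<omega>)
                / (\<sigma> - \<omega>)))"
proof -
  define a where "a = sqrt (real m * real d) * \<eta>0"
  define ps where "ps = psi L_C R"
  define W where "W = omega_bar R \<sigma> lam L_A L_Z L_C"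
  define V where "V = V0 m d R \<sigma> lam L_A L_C L_Z \<eta>0 cstar D \<omega>"
  define F where "F = Fseq m d R \<sigma> lam L_A L_C L_Z \<eta>0 cstar D \<omega>"
  define P where "P = \<sigma> - lam"
  define Qp where "Qp = 2*L_A*L_Z*(real R * ps)^2"
  define t where "t = \<omega>/\<sigma>"
  define u where "u = real R * t"
  define M where "M = max cstar D"
  define k where "k = 1 + L_C*\<sigma>"
  define N where "N = 1 + u*(k*ps - 1)"
  define q where "q = 2*L_C/(1-t)"
  define K where "K = (a*k + 2*L_Z*V)/(\<sigma>-\<omega>)"
  define S where "S = (\<Sum>s=1..R. \<Sum>j<s. q^j)"
  define Lam where "Lam = L_A * real R * ps"
  define Z where "Z = 2*L_Z*Lam"
  define D1 where "D1 = P - u*(P+Qp)"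
  define G where "G = t*S/(1-t)"
  have R1: "1 \<le> real R" using assms by simp
  have sig: "0 < \<sigma>" using assms by simp
  have a0: "0 < a" unfolding a_def using assms by simp
  have ps1: "1 \<le> ps" unfolding ps_def psi_def by simp
  have P0: "0 < P" unfolding P_def using assms by simp
  have Qp0: "0 \<le> Qp" unfolding Qp_def using assms by simp
  have Wd: "W = \<sigma>/real R * (P/(P+Qp))"
    unfolding W_def omega_bar_def P_def Qp_def ps_def by simp
  have W0: "0 < W" unfolding Wd using sig P0 Qp0 R1 by simp
  have WR: "W \<le> \<sigma>/real R"
  proof -
    have "P/(P+Qp) \<le> 1" using P0 Qp0 by simp
    then show ?thesis unfolding Wd using sig R1
      by (metis mult_left_le divide_nonneg_nonneg less_eq_real_def of_nat_0_le_iff)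
  qed
  have wW: "\<omega> < W" using assms W_def by simp
  have w0: "0 \<le> \<omega>" using assms by simp
  have t0: "0 \<le> t" unfolding t_def using w0 sig by simp
  have u1: "u < 1"
  proof -
    have "\<omega> < \<sigma>/real R" using wW WR by simp
    then have "\<omega> * real R < \<sigma>" using R1 by (simp add: field_simps)
    then show ?thesis unfolding u_def t_def using sig by (simp add: field_simps)
  qed
  have u0: "0 \<le> u" unfolding u_def using t0 by simp
  have tu: "t \<le> u" unfolding u_def using t0 R1 mult_right_mono[OF R1 t0] by simp
  have t1: "t < 1" using tu u1 by simp
  have ws: "\<omega> < \<sigma>" using t1 sig unfolding t_def by (simp add: field_simps)
  have w1: "\<omega> < 1" using ws assms by simp
  have sw0: "0 < \<sigma> - \<omega>" using ws by simp
  have sw1: "\<sigma> - \<omega> \<le> 1" using assms by simp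
  have wWe: "\<omega>/W = u*(P+Qp)/P"
    unfolding Wd u_def t_def using sig P0 Qp0 R1 by (simp add: field_simps)
  have D1pos: "0 < D1"
  proof -
    have "\<omega>/W < 1" using wW W0 by simp
    then have "u*(P+Qp)/P < 1" using wWe by simp
    then have "u*(P+Qp) < P" using P0 by (simp add: field_simps)
    then show ?thesis unfolding D1_def by simp
  qed
  have omW: "1 - \<omega>/W = D1/P" unfolding wWe D1_def using P0 by (simp add: field_simps)
  have QpZ: "Qp = Z*real R*ps" unfolding Qp_def Z_def Lam_def by (simp add: power2_eq_square)
  have D1Z: "D1 = P*(1-u) - u*Z*real R*ps" unfolding D1_def QpZ by (simp add: algebra_simps)
  have k1: "1 \<le> k" unfolding k_def using assms by simp
  have N1: "1 \<le> N"
  proof -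
    have "1 \<le> k*ps" using k1 ps1 mult_mono[of 1 k 1 ps] by simp
    then show ?thesis unfolding N_def using u0 by simp
  qed
  have Lam0: "0 \<le> Lam" unfolding Lam_def using assms ps1 by simp
  have Z0: "0 \<le> Z" unfolding Z_def using Lam0 assms by simp
  define Y where "Y = Lam*a*real R*N/D1"
  have Y0: "0 \<le> Y" unfolding Y_def using Lam0 a0 N1 D1pos by simp
  have VY: "V = M + Y"
  proof -
    have "V = M + (L_A * ps * sqrt (real m * real d) * (real R)\<^sup>2 * \<eta>0) / P * (N / (1 - \<omega>/W))"
      unfolding V_def V0_def M_def ps_def P_def N_def u_def t_def k_def W_def
      by (simp add: mult.assoc)
    also have "\<dots> = M + Y" unfolding omW Y_def Lam_def a_def using P0 D1pos
      by (simp add: field_simps power2_eq_square)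
    finally show ?thesis .
  qed
  have VM: "M \<le> V" using VY Y0 by simp
  have M0: "0 \<le> M" unfolding M_def using assms by simp
  have V0': "0 \<le> V" using VM M0 by simp
  have Vc: "cstar \<le> V" "D \<le> V" using VM unfolding M_def by auto
  have q0: "0 \<le> q" unfolding q_def using t1 assms by simp
  have K0: "0 \<le> K" unfolding K_def using a0 k1 assms V0' sw0 by simp
  have Fe: "F s = K * (\<Sum>j<s. q^j)" for s
    unfolding F_def Fseq_def K_def q_def t_def a_def k_def V_def by simp
  have SFK: "(\<Sum>s=1..R. F s) = K*S" unfolding Fe S_def by (simp add: sum_distrib_left)
  have S0: "0 \<le> S" unfolding S_def using q0 by (intro sum_nonneg) auto
  have key: "S*(1-u) \<le> (real R)^2*ps*(1-t)"
    using key_sum[OF t0 t1, of L_C R] assms unfolding S_def q_def u_def ps_def by simp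
  have G0: "0 \<le> G" unfolding G_def using t0 t1 S0 by simp
  have Gb: "G*(1-u) \<le> u*real R*ps"
  proof -
    have "G*(1-u) = t*(S*(1-u))/(1-t)" unfolding G_def by simp
    also have "\<dots> \<le> t*((real R)^2*ps*(1-t))/(1-t)"
      using key t0 t1 by (intro divide_right_mono mult_left_mono) auto
    also have "\<dots> = u*real R*ps" unfolding u_def using t1 by (simp add: power2_eq_square)
    finally show ?thesis .
  qed
  have wKS: "\<omega>*K*S = G*(a*k + 2*L_Z*V)"
    unfolding K_def G_def t_def using sig sw0 by (simp add: field_simps)
  have Lt: "L_A * (\<Sum>s<R. L_C ^ s) \<le> Lam"
  proof -
    have "(\<Sum>s<R. L_C ^ s) \<le> (\<Sum>s<R. ps)"
      unfolding ps_def by (intro sum_mono pow_le_psi(2)) (use assms in auto)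
    then have "L_A * (\<Sum>s<R. L_C ^ s) \<le> L_A * (\<Sum>s<R. ps)" using assms(7) by (rule mult_left_mono)
    then show ?thesis unfolding Lam_def by (simp add: mult.assoc)
  qed
  have Lt0: "0 \<le> L_A * (\<Sum>s<R. L_C ^ s)" using assms by (simp add: sum_nonneg)
  have PZG: "0 < P - Z*G"
  proof -
    have "Z*(G*(1-u)) \<le> Z*(u*real R*ps)" using Gb Z0 by (rule mult_left_mono)
    then have "D1 \<le> (P - Z*G)*(1-u)" unfolding D1Z by (simp add: algebra_simps)
    then have "0 < (P - Z*G)*(1-u)" using D1pos by simp
    then show ?thesis using u1 by (simp add: zero_less_mult_iff)
  qed
  have ident: "real R*N*(P - Z*G) - (real R + G*k)*D1 = (P*k + Z*real R)*(u*real R*ps - G*(1-u))"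
    unfolding D1Z N_def by (simp add: algebra_simps)
  have idnn: "0 \<le> (P*k + Z*real R)*(u*real R*ps - G*(1-u))"
    using P0 k1 Z0 Gb by simp
  have Yb: "Lam*a*(real R + G*k) \<le> Y*(P - Z*G)"
  proof -
    have "Lam*a*((real R + G*k)*D1) \<le> Lam*a*(real R*N*(P - Z*G))"
      using ident idnn Lam0 a0 by (intro mult_left_mono) auto
    then have "Lam*a*(real R + G*k)*D1 \<le> Lam*a*real R*N*(P - Z*G)" by (simp add: mult.assoc)
    then show ?thesis unfolding Y_def using D1pos by (simp add: field_simps)
  qed
  have main: "Lam*(a*real R + \<omega>*K*S) \<le> P*V"
  proof -
    have "M*(P-Z*G) \<ge> 0" using M0 PZG by simp
    then have "Lam*a*(real R + G*k) \<le> V*(P - Z*G)" using Yb unfolding VY by (simp add: algebra_simps)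
    then show ?thesis unfolding wKS Z_def by (simp add: algebra_simps)
  qed
  have c1: "(a*real R + \<omega>*(\<Sum>s=1..R. F s)) / P * (L_A * (\<Sum>s<R. L_C ^ s)) \<le> V"
  proof -
    have nn: "0 \<le> a*real R + \<omega>*K*S" using a0 w0 K0 S0 by simp
    have "(a*real R + \<omega>*K*S) / P * (L_A * (\<Sum>s<R. L_C ^ s)) \<le> (a*real R + \<omega>*K*S) / P * Lam"
      using Lt nn P0 by (intro mult_left_mono) auto
    also have "\<dots> \<le> V" using main P0 by (simp add: field_simps)
    finally show ?thesis unfolding SFK by (simp add: mult.assoc)
  qed
  have part1: "V \<ge> max D ((sqrt (real m * real d) * real R * \<eta>0
                   + \<omega> * (\<Sum>s=1..R. F s)) / (\<sigma> - lam) * (L_A * (\<Sum>s<R. L_C ^ s)))"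
    using c1 Vc unfolding a_def P_def by (simp add: mult.commute mult.left_commute)
  have part2: "\<forall>s\<in>{1..R}. F s \<ge> max (L_Z * cstar + L_C * sqrt (real m * real d) * \<eta>0
                + L_C * (1 + \<omega>) * F (s - 1))
               ((sqrt (real m * real d) * \<eta>0 * (1 + L_C * \<sigma>)
                 + L_C * \<sigma> * (1 + \<omega>) * F (s - 1)
                 + L_Z * (1 + \<sigma>) * V) / (\<sigma> - \<omega>))"
  proof
    fix s assume "s \<in> {1..R}"
    then obtain n where sn: "s = Suc n" by (cases s) auto
    define Fp where "Fp = F (s-1)"
    have Fp0: "0 \<le> Fp" unfolding Fp_def Fe using K0 q0 by (simp add: sum_nonneg)
    have Fs: "F s = K + q*Fp"
    proof -
      have "(\<Sum>j<Suc n. q^j) = 1 + q*(\<Sum>j<n. q^j)"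
        by (subst sum.lessThan_Suc_shift) (simp add: sum_distrib_left)
      then show ?thesis unfolding Fp_def Fe sn by (simp add: algebra_simps)
    qed
    have qs: "q = 2*L_C*\<sigma>/(\<sigma>-\<omega>)" unfolding q_def t_def using sig sw0 by (simp add: field_simps)
    have q2: "2*L_C \<le> q"
    proof -
      have "2*L_C*(\<sigma>-\<omega>) \<le> 2*L_C*\<sigma>" using assms(8) w0 by (intro mult_left_mono) auto
      then show ?thesis unfolding qs using sw0 by (simp add: field_simps)
    qed
    have A1: "L_C*(1+\<omega>)*Fp \<le> q*Fp"
    proof -
      have "L_C*(1+\<omega>) \<le> L_C*2" using assms(8) w1 by (intro mult_left_mono) auto
      then have "L_C*(1+\<omega>) \<le> 2*L_C" by simp
      then show ?thesis using q2 Fp0 by (intro mult_right_mono) auto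
    qed
    have A2: "L_Z*cstar + L_C*a \<le> K"
    proof -
      have "(L_Z*cstar + L_C*a)*(\<sigma>-\<omega>) \<le> L_Z*cstar + L_C*a*\<sigma>"
      proof -
        have "L_Z*cstar*(\<sigma>-\<omega>) \<le> L_Z*cstar*1" using sw1 assms(9,11) by (intro mult_left_mono) auto
        moreover have "L_C*a*(\<sigma>-\<omega>) \<le> L_C*a*\<sigma>" using assms(8) a0 w0 by (intro mult_left_mono) auto
        ultimately show ?thesis by (simp add: algebra_simps)
      qed
      also have "\<dots> \<le> a*k + 2*L_Z*V"
      proof -
        have "L_Z*cstar \<le> L_Z*(2*V)" using Vc assms(9,11) V0' by (intro mult_left_mono) auto
        then show ?thesis unfolding k_def using a0 by (simp add: algebra_simps)
      qed
      finally show ?thesis unfolding K_def using sw0 by (simp add: field_simps)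
    qed
    have B: "(a*k + L_C*\<sigma>*(1+\<omega>)*Fp + L_Z*(1+\<sigma>)*V)/(\<sigma>-\<omega>) \<le> K + q*Fp"
    proof -
      have e: "K + q*Fp = (a*k + 2*L_Z*V + 2*L_C*\<sigma>*Fp)/(\<sigma>-\<omega>)"
        unfolding K_def qs by (simp add: add_divide_distrib)
      have "L_C*\<sigma>*(1+\<omega>)*Fp \<le> 2*L_C*\<sigma>*Fp"
      proof -
        have "L_C*\<sigma>*Fp*(1+\<omega>) \<le> L_C*\<sigma>*Fp*2" using assms Fp0 w1 sig by (intro mult_left_mono) auto
        then show ?thesis by (simp add: algebra_simps)
      qed
      moreover have "L_Z*(1+\<sigma>)*V \<le> 2*L_Z*V"
      proof -
        have "L_Z*V*(1+\<sigma>) \<le> L_Z*V*2" using assms V0' by (intro mult_left_mono) auto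
        then show ?thesis by (simp add: algebra_simps)
      qed
      ultimately show ?thesis unfolding e using sw0 by (intro divide_right_mono) auto
    qed
    show "F s \<ge> max (L_Z * cstar + L_C * sqrt (real m * real d) * \<eta>0
                + L_C * (1 + \<omega>) * F (s - 1))
               ((sqrt (real m * real d) * \<eta>0 * (1 + L_C * \<sigma>)
                 + L_C * \<sigma> * (1 + \<omega>) * F (s - 1)
                 + L_Z * (1 + \<sigma>) * V) / (\<sigma> - \<omega>))"
      using A1 A2 B unfolding Fs Fp_def[symmetric] a_def k_def by (simp add: mult.assoc)
  qed
  show ?thesis using part1 part2 unfolding V_def F_def by blast
qed

end
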